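(* Let $k$ be a positive integer, and $G$ an edge-colored graph of order $n\geq 105k-24$ such that $|CN(u)\cup CN(v)|\geq n-1$ for every pair of vertices $u$ and $v$ in $V(G)$. Then $G$ contains $k$ (distinct) rainbow $C_4$'s.
   Context: An edge-colored graph is a finite simple graph $G$ with a map $C:E(G)\to\mathbb{N}$. For $v\in V(G)$, the color neighborhood $CN(v)$ is the set of colors assigned to edges incident to $v$. A subgraph is rainbow if all its edges have distinct colors; $C_4$ denotes a cycle of length 4. *)

theory Defs
  imports Main
begin

text \<open>A finite simple graph: a finite vertex set V and a set E of edges,
each edge being a 2-element subset of V. An edge colouring is a map
C from edges to natural numbers (only its values on E matter).\<close>

definition simple_graph :: "'a set \<Rightarrow> 'a set set \<Rightarrow> bool" where
  "simple_graph V E \<longleftrightarrow> finite V \<and> (\<forall>e\<in>E. e \<subseteq> V \<and> card e = 2)"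

definition color_nbhd :: "'a set set \<Rightarrow> ('a set \<Rightarrow> nat) \<Rightarrow> 'a \<Rightarrow> nat set" where
  "color_nbhd E C v = C ` {e \<in> E. v \<in> e}"

definition is_C4 :: "'a set \<Rightarrow> 'a set set \<Rightarrow> 'a set set \<Rightarrow> bool" where
  "is_C4 V E F \<longleftrightarrow> (\<exists>a b c d. a \<in> V \<and> b \<in> V \<and> c \<in> V \<and> d \<in> V \<and>
      distinct [a, b, c, d] \<and> F = {{a,b},{b,c},{c,d},{d,a}} \<and> F \<subseteq> E)"

definition rainbow :: "('a set \<Rightarrow> nat) \<Rightarrow> 'a set set \<Rightarrow> bool" where
  "rainbow C F \<longleftrightarrow> inj_on C F"

end

theory Submission
  imports Defs
begin



lemma card4_obtain:
  assumes "4 \<le> card (S::'b set)"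
  obtains a b c d where "a\<in>S" "b\<in>S" "c\<in>S" "d\<in>S" "distinct [a,b,c,d]"
proof -
  obtain T where T: "T \<subseteq> S" "card T = 4" "finite T" using obtain_subset_with_card_n[OF assms] by blast
  from T(2) have "\<exists>a b c d. T = {a,b,c,d} \<and> distinct [a,b,c,d]"
    by (simp add: card_Suc_eq numeral_eq_Suc) (metis insert_iff)
  then show ?thesis using T(1) that by auto
qed

locale cg =
  fixes V :: "'a set" and E :: "'a set set" and C :: "'a set \<Rightarrow> nat"
  assumes sg: "simple_graph V E"
    and norb: "\<not> (\<exists>F. is_C4 V E F \<and> rainbow C F)"
begin

lemma N3:
  assumes p: "p \<in> V" and q: "q \<in> V" and pq: "p \<noteq> q" and Y: "Y \<subseteq> V - {p,q}"
    and ed: "\<forall>y\<in>Y. {p,y} \<in> E \<and> {q,y} \<in> E \<and> C {p,y} \<noteq> C {q,y}"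
    and inj: "inj_on (\<lambda>y. C {p,y}) Y"
  shows "card ((\<lambda>y. C {q,y}) ` Y) \<le> 3"
proof (rule ccontr)
  assume "\<not> ?thesis"
  then have "4 \<le> card ((\<lambda>y. C {q,y}) ` Y)" by simp
  then obtain b1 b2 b3 b4 where bs: "b1 \<in> (\<lambda>y. C {q,y}) ` Y" "b2 \<in> (\<lambda>y. C {q,y}) ` Y"
     "b3 \<in> (\<lambda>y. C {q,y}) ` Y" "b4 \<in> (\<lambda>y. C {q,y}) ` Y" "distinct [b1,b2,b3,b4]"
    by (rule card4_obtain)
  then obtain y1 y2 y3 y4 where ys: "y1\<in>Y" "y2\<in>Y" "y3\<in>Y" "y4\<in>Y"
    "C {q,y1} = b1" "C {q,y2} = b2" "C {q,y3} = b3" "C {q,y4} = b4" by blast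
  have key: "C {p,y} = C {q,z} \<or> C {p,z} = C {q,y}" if "y \<in> Y" "z \<in> Y" "C {q,y} \<noteq> C {q,z}" for y z
  proof (rule ccontr)
    assume nc: "\<not> ?thesis"
    have yz: "y \<noteq> z" using that by auto
    have pyz: "C {p,y} \<noteq> C {p,z}" using inj yz that unfolding inj_on_def by blast
    have vs: "y \<in> V" "z \<in> V" "y \<noteq> p" "y \<noteq> q" "z \<noteq> p" "z \<noteq> q" using Y that by auto
    have e: "{p,y} \<in> E" "{q,y} \<in> E" "{p,z} \<in> E" "{q,z} \<in> E" "C {p,y} \<noteq> C {q,y}" "C {p,z} \<noteq> C {q,z}"
      using ed that by auto
    let ?F = "{{p,y},{y,q},{q,z},{z,p}}"
    have "is_C4 V E ?F" unfolding is_C4_def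
      apply (rule exI[of _ p], rule exI[of _ y], rule exI[of _ q], rule exI[of _ z])
      using p q pq vs yz e by (auto simp: insert_commute)
    moreover have "rainbow C ?F" unfolding rainbow_def inj_on_def
      using nc pyz e that(3) by (auto simp: insert_commute)
    ultimately show False using norb by blast
  qed
  show False using key[OF ys(1) ys(2)] key[OF ys(1) ys(3)] key[OF ys(1) ys(4)]
      key[OF ys(2) ys(3)] key[OF ys(2) ys(4)] key[OF ys(3) ys(4)] ys bs(5)
      inj[unfolded inj_on_def]
    by (smt (verit) distinct_length_2_or_more distinct_singleton)
qed

end



lemma fiber_pairs:
  assumes fin: "finite A"
  shows "card {(a,c). a\<in>A \<and> c\<in>A \<and> a\<noteq>c \<and> f a = f c} \<le> 2*(card A - card (f`A))^2"
proof -
  define D where "D = card A - card (f`A)"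
  define A2 where "A2 = {a\<in>A. \<exists>c\<in>A. c\<noteq>a \<and> f c = f a}"
  define A1 where "A1 = A - A2"
  have fA2: "finite A2" "finite A1" using fin by (auto simp: A2_def A1_def)
  have injA1: "inj_on f A1" unfolding inj_on_def A1_def A2_def by (metis (mono_tags, lifting) DiffE mem_Collect_eq)
  have disj: "f`A1 \<inter> f`A2 = {}"
  proof (rule ccontr)
    assume "f`A1 \<inter> f`A2 \<noteq> {}"
    then obtain a b where ab: "a\<in>A1" "b\<in>A2" "f a = f b" by auto
    then have "a \<noteq> b" "a \<in> A" "b \<in> A" "a \<notin> A2" unfolding A1_def A2_def by auto
    then have "a \<in> A2" using ab unfolding A2_def by auto
    then show False using \<open>a \<notin> A2\<close> by simp
  qed
  have AU: "A = A1 \<union> A2" "A1 \<inter> A2 = {}" unfolding A1_def A2_def by auto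
  have cfA: "card (f`A) = card A1 + card (f`A2)"
    using AU disj card_Un_disjoint[of "f`A1" "f`A2"] fA2 card_image[OF injA1]
    by (metis image_Un finite_imageI)
  have cA: "card A = card A1 + card A2" using AU fA2 card_Un_disjoint by metis
  have half: "2 * card (f`A2) \<le> card A2"
  proof -
    have "A2 = (\<Union>v\<in>f`A2. {a\<in>A2. f a = v})" by auto
    moreover have "card (\<Union>v\<in>f`A2. {a\<in>A2. f a = v}) = (\<Sum>v\<in>f`A2. card {a\<in>A2. f a = v})"
      by (rule card_UN_disjoint) (use fA2 in auto)
    ultimately have "card A2 = (\<Sum>v\<in>f`A2. card {a\<in>A2. f a = v})" by simp
    moreover have "(\<Sum>v\<in>f`A2. card {a\<in>A2. f a = v}) \<ge> (\<Sum>v\<in>f`A2. 2)"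
    proof (rule sum_mono)
      fix v assume "v \<in> f`A2"
      then obtain a where a: "a \<in> A2" "f a = v" by auto
      then obtain c where c: "c\<in>A" "c \<noteq> a" "f c = f a" unfolding A2_def by auto
      have "c \<in> A2" using c a unfolding A2_def by auto
      then have "{a,c} \<subseteq> {a\<in>A2. f a = v}" using a c by auto
      moreover have "finite {a\<in>A2. f a = v}" using fA2 by auto
      ultimately have "card {a,c} \<le> card {a\<in>A2. f a = v}" using card_mono by blast
      then show "2 \<le> card {a\<in>A2. f a = v}" using c by auto
    qed
    ultimately show ?thesis by simp
  qed
  have cA2: "card A2 \<le> 2*D" unfolding D_def using cfA cA half by linarith
  have fib: "card {c\<in>A. c\<noteq>a \<and> f c = f a} \<le> D" if "a \<in> A" for a
  proof -
    let ?X = "{c\<in>A. c\<noteq>a \<and> f c = f a}"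
    have "f`A = f`(A - ?X)" using that by auto
    then have "card (f`A) \<le> card (A - ?X)" using card_image_le[of "A - ?X" f] fin by simp
    moreover have "card (A - ?X) = card A - card ?X" using fin by (intro card_Diff_subset) auto
    moreover have "card ?X \<le> card A" using fin by (intro card_mono) auto
    ultimately show ?thesis unfolding D_def by linarith
  qed
  have sub: "{(a,c). a\<in>A \<and> c\<in>A \<and> a\<noteq>c \<and> f a = f c} \<subseteq> Sigma A2 (\<lambda>a. {c\<in>A. c\<noteq>a \<and> f c = f a})"
    unfolding A2_def by clarsimp (metis)
  have "card {(a,c). a\<in>A \<and> c\<in>A \<and> a\<noteq>c \<and> f a = f c} \<le> card (Sigma A2 (\<lambda>a. {c\<in>A. c\<noteq>a \<and> f c = f a}))"
    using sub fA2 fin by (intro card_mono) auto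
  also have "\<dots> = (\<Sum>a\<in>A2. card {c\<in>A. c\<noteq>a \<and> f c = f a})"
    using fA2 fin by (intro card_SigmaI) auto
  also have "\<dots> \<le> (\<Sum>a\<in>A2. D)" using fib by (intro sum_mono) (auto simp: A2_def)
  also have "\<dots> = card A2 * D" by simp
  also have "\<dots> \<le> 2*D*D" using cA2 by simp
  finally show ?thesis unfolding D_def by (simp add: power2_eq_square)
qed




lemma cs_nat:
  fixes k :: "'b \<Rightarrow> nat"
  assumes fin: "finite I"
  shows "(\<Sum>i\<in>I. k i)^2 \<le> card I * (\<Sum>i\<in>I. (k i)^2)"
proof -
  define a :: "'b \<Rightarrow> int" where "a i = int (k i)" for i
  define S where "S = (\<Sum>i\<in>I. a i)"
  define Q where "Q = (\<Sum>i\<in>I. (a i)^2)"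
  have "\<And>i j. (a i - a j)^2 = (a i)^2 - 2 * a i * a j + (a j)^2" by (simp add: power2_diff)
  have inner: "(\<Sum>j\<in>I. (a i - a j)^2) = int (card I) * (a i)^2 - 2 * a i * S + Q" for i
  proof -
    have "(\<Sum>j\<in>I. (a i - a j)^2) = (\<Sum>j\<in>I. (a i)^2 - 2 * a i * a j + (a j)^2)"
      by (simp add: power2_diff algebra_simps)
    also have "\<dots> = (\<Sum>j\<in>I. (a i)^2) - (\<Sum>j\<in>I. 2 * a i * a j) + (\<Sum>j\<in>I. (a j)^2)"
      by (simp add: sum.distrib sum_subtractf)
    also have "(\<Sum>j\<in>I. 2 * a i * a j) = 2 * a i * S" unfolding S_def by (simp add: sum_distrib_left)
    finally show ?thesis unfolding Q_def by simp
  qed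
  have "(\<Sum>i\<in>I. \<Sum>j\<in>I. (a i - a j)^2) = (\<Sum>i\<in>I. int (card I) * (a i)^2 - 2 * a i * S + Q)"
    using inner by simp
  also have "\<dots> = (\<Sum>i\<in>I. int (card I) * (a i)^2) - (\<Sum>i\<in>I. 2 * a i * S) + (\<Sum>i\<in>I. Q)"
    by (simp only: sum.distrib sum_subtractf)
  also have "\<dots> = int (card I) * Q - 2 * S * S + int (card I) * Q"
    unfolding Q_def S_def by (simp add: sum_distrib_left sum_distrib_right mult.commute mult.left_commute)
  finally have eq: "(\<Sum>i\<in>I. \<Sum>j\<in>I. (a i - a j)^2) = 2 * (int (card I) * Q) - 2 * S * S" by simp
  have "(\<Sum>i\<in>I. \<Sum>j\<in>I. (a i - a j)^2) \<ge> 0" by (intro sum_nonneg zero_le_power2)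
  then have "S * S \<le> int (card I) * Q" using eq by linarith
  then have "int ((\<Sum>i\<in>I. k i)^2) \<le> int (card I * (\<Sum>i\<in>I. (k i)^2))"
    unfolding S_def Q_def a_def by (simp add: power2_eq_square)
  then show ?thesis by linarith
qed




lemma card_as_sum: "finite B \<Longrightarrow> card {b\<in>B. P b} = (\<Sum>b\<in>B. (of_bool (P b) :: nat))"
proof -
  assume f: "finite B"
  have "B \<inter> {x. P x} = {b\<in>B. P b}" by auto
  moreover have "(\<Sum>b\<in>B. (of_bool (P b)::nat)) = of_nat (card (B \<inter> {x. P x}))"
    by (rule sum_of_bool_eq[OF f]) (rule f)
  ultimately show ?thesis by simp
qed

lemma double_count:
  assumes "finite A" "finite B"
  shows "(\<Sum>a\<in>A. card {b\<in>B. P a b}) = (\<Sum>b\<in>B. card {a\<in>A. P a b})"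
proof -
  have "(\<Sum>a\<in>A. card {b\<in>B. P a b}) = (\<Sum>a\<in>A. \<Sum>b\<in>B. (of_bool (P a b) :: nat))"
    using assms by (simp add: card_as_sum)
  also have "\<dots> = (\<Sum>b\<in>B. \<Sum>a\<in>A. (of_bool (P a b) :: nat))" by (rule sum.swap)
  also have "\<dots> = (\<Sum>b\<in>B. card {a\<in>A. P a b})" using assms by (simp add: card_as_sum)
  finally show ?thesis .
qed

lemma card_offdiag:
  assumes "finite A"
  shows "card {p\<in>A\<times>A. fst p \<noteq> snd p} = card A * card A - card A"
proof -
  have "A\<times>A = {p\<in>A\<times>A. fst p \<noteq> snd p} \<union> (\<lambda>a. (a,a)) ` A" by auto
  moreover have "{p\<in>A\<times>A. fst p \<noteq> snd p} \<inter> (\<lambda>a. (a,a)) ` A = {}" by auto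
  moreover have "card ((\<lambda>a. (a,a)) ` A) = card A" by (rule card_image) (auto simp: inj_on_def)
  moreover have "finite {p\<in>A\<times>A. fst p \<noteq> snd p}" using assms by auto
  ultimately have "card (A\<times>A) = card {p\<in>A\<times>A. fst p \<noteq> snd p} + card A"
    using assms by (metis (no_types, lifting) card_Un_disjoint finite_imageI)
  then show ?thesis by (simp add: card_cartesian_product)
qed

context cg begin

abbreviation CN where "CN u \<equiv> color_nbhd E C u"

lemma finV: "finite V" using sg unfolding simple_graph_def by auto

lemma finE: "finite E"
proof -
  have "E \<subseteq> Pow V" using sg unfolding simple_graph_def by auto
  then show ?thesis using finV finite_subset by blast
qed

lemma edge_facts: assumes "{u,v} \<in> E" shows "u \<in> V" "v \<in> V" "u \<noteq> v"
proof -
  have "{u,v} \<subseteq> V" "card {u,v} = 2" using sg assms unfolding simple_graph_def by auto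
  then show "u \<in> V" "v \<in> V" "u \<noteq> v" by auto
qed

lemma finCN: "finite (CN u)" unfolding color_nbhd_def using finE by auto

lemma CN_mem: assumes "\<gamma> \<in> CN w"
  obtains z where "{w,z} \<in> E" "C {w,z} = \<gamma>" "z \<noteq> w" "z \<in> V"
proof -
  obtain e where e: "e \<in> E" "w \<in> e" "C e = \<gamma>" using assms unfolding color_nbhd_def by auto
  then have "card e = 2" using sg unfolding simple_graph_def by auto
  then obtain a b where ab: "e = {a,b}" "a \<noteq> b" by (auto simp: card_2_iff)
  then obtain z where "e = {w,z}" using e(2) by (auto simp: insert_commute)
  then show ?thesis using that e edge_facts by (metis insert_absorb2 ab(1,2) e(1) insert_commute)
qed

lemma CN_edge: "{w,z} \<in> E \<Longrightarrow> C {w,z} \<in> CN w"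
  unfolding color_nbhd_def by auto

end




locale cgx = cg +
  fixes x :: 'a and R :: "'a set" and s :: nat
  assumes x: "x \<in> V"
    and Rsub: "\<forall>y\<in>R. {x,y} \<in> E"
    and Rinj: "inj_on (\<lambda>y. C {x,y}) R"
    and Rim: "(\<lambda>y. C {x,y}) ` R = CN x"
    and cond: "\<forall>u\<in>V. \<forall>v\<in>V. u \<noteq> v \<longrightarrow> card V \<le> card (CN u \<union> CN v) + 1 + s"
    and big: "79 + 19*s \<le> card V"
begin

abbreviation \<alpha> where "\<alpha> y \<equiv> C {x,y}"

definition B where "B = V - R - {x}"
definition Zw where "Zw w = {y\<in>R - {w}. {w,y} \<in> E \<and> C {w,y} \<noteq> \<alpha> y}"
definition N3s where "N3s w = (\<lambda>y. C {w,y}) ` Zw w"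
definition M where "M w = {y\<in>R - {w}. {w,y} \<in> E \<and> C {w,y} = \<alpha> y}"
definition CB where "CB w = (\<lambda>z. C {w,z}) ` {z\<in>B. {w,z} \<in> E}"

lemma R_V: "R \<subseteq> V - {x}" using Rsub edge_facts by blast
lemma finR: "finite R" using R_V finV finite_subset by blast
lemma finB: "finite B" unfolding B_def using finV by auto
lemma cardR: "card R = card (CN x)" using Rim Rinj card_image by fastforce
lemma card_split: "card B + card R + 1 = card V"
proof -
  have "V = B \<union> R \<union> {x}" "B \<inter> R = {}" "x \<notin> B \<union> R" unfolding B_def using R_V x by auto
  moreover have "card (R \<union> {x}) = card R + 1" using finR \<open>x \<notin> B \<union> R\<close> by simp
  moreover have "card (B \<union> (R \<union> {x})) = card B + card (R \<union> {x})"
    using finB finR \<open>B \<inter> R = {}\<close> \<open>x \<notin> B \<union> R\<close> by (intro card_Un_disjoint) auto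
  ultimately show ?thesis by (metis Un_assoc add.assoc)
qed

lemma alpha_CN: "y \<in> R \<Longrightarrow> \<alpha> y \<in> CN x" using Rim by auto

lemma N3s_card: assumes "w \<in> V" "w \<noteq> x" shows "card (N3s w) \<le> 3"
  unfolding N3s_def
proof (rule N3[OF x assms(1) assms(2)[symmetric]])
  show "Zw w \<subseteq> V - {x, w}" unfolding Zw_def using R_V by auto
  show "\<forall>y\<in>Zw w. {x, y} \<in> E \<and> {w, y} \<in> E \<and> C {x, y} \<noteq> C {w, y}" unfolding Zw_def using Rsub by auto
  show "inj_on (\<lambda>y. C {x, y}) (Zw w)" using Rinj unfolding Zw_def by (rule inj_on_subset) auto
qed

lemma cover: assumes w: "w \<in> V" "w \<noteq> x"
  shows "CN w \<subseteq> \<alpha> ` M w \<union> N3s w \<union> {C {x,w}} \<union> CB w"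
proof
  fix \<gamma> assume "\<gamma> \<in> CN w"
  then obtain z where z: "{w,z} \<in> E" "C {w,z} = \<gamma>" "z \<noteq> w" "z \<in> V" by (rule CN_mem)
  show "\<gamma> \<in> \<alpha> ` M w \<union> N3s w \<union> {C {x,w}} \<union> CB w"
  proof (cases "z = x")
    case True then show ?thesis using z by (auto simp: insert_commute)
  next
    case False
    show ?thesis
    proof (cases "z \<in> R")
      case True
      show ?thesis
      proof (cases "C {w,z} = \<alpha> z")
        case True
        then have "z \<in> M w" unfolding M_def using \<open>z\<in>R\<close> z by auto
        then show ?thesis using True z by auto
      next
        case False
        then have "z \<in> Zw w" unfolding Zw_def using \<open>z\<in>R\<close> z by auto
        then show ?thesis using z unfolding N3s_def by auto
      qed
    next
      case False
      then have "z \<in> B" unfolding B_def using z \<open>z \<noteq> x\<close> by auto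
      then show ?thesis using z unfolding CB_def by auto
    qed
  qed
qed

lemma CB_card: "card (CB w) \<le> card B"
proof -
  have "card (CB w) \<le> card {z\<in>B. {w,z} \<in> E}" unfolding CB_def using finB by (intro card_image_le) auto
  also have "\<dots> \<le> card B" using finB by (intro card_mono) auto
  finally show ?thesis .
qed

end



lemma arith1:
  fixes m T L :: int
  assumes m2: "m \<ge> 2" and h1: "m*m - m \<le> 2*T" and h2: "T^2 \<le> m*((m*m-m)*L + T)"
  shows "m \<le> 4*L+3"
proof -
  define H2 where "H2 = m*m - m"
  have "m*m \<ge> 2*m" using m2 by (simp add: mult_right_mono)
  then have H2m: "H2 \<ge> m" unfolding H2_def by linarith
  have h1': "H2 \<le> 2*T" using h1 unfolding H2_def .
  have a: "(2*T - H2)*(2*T + H2 - 2*m) \<ge> 0" using h1' H2m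
    by (intro mult_nonneg_nonneg) auto
  have b: "(2*T - H2)*(2*T + H2 - 2*m) = 4*T^2 - 4*m*T - (H2*H2 - 2*m*H2)"
    by (simp add: algebra_simps power2_eq_square)
  have c: "H2*H2 - 2*m*H2 = (m*m*(m-1))*(m-3)" unfolding H2_def by (simp add: algebra_simps)
  have d0: "m*((m*m-m)*L + T) = (m*m*(m-1))*L + m*T" by (simp add: algebra_simps)
  have d: "4*T^2 - 4*m*T \<le> (m*m*(m-1))*(4*L)" using h2 d0 by linarith
  have e: "(m*m*(m-1))*(m-3) \<le> (m*m*(m-1))*(4*L)" using a b c d by linarith
  have pos: "m*m*(m-1) > 0" using m2 by simp
  show ?thesis using e pos by (simp add: mult_le_cancel_left_pos)
qed

context cgx begin

definition K where "K w = (R - {w}) - M w"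

lemma K_sub: "K w \<subseteq> R" unfolding K_def by auto

lemma pairK: assumes "w \<in> R" "y \<in> R" "w \<noteq> y" shows "y \<in> K w \<or> w \<in> K y"
proof (rule ccontr)
  assume "\<not> ?thesis"
  then have "y \<in> M w" "w \<in> M y" unfolding K_def using assms by auto
  then have "C {w,y} = \<alpha> y" "C {y,w} = \<alpha> w" unfolding M_def by auto
  then have "\<alpha> y = \<alpha> w" by (simp add: insert_commute)
  then show False using Rinj assms unfolding inj_on_def by auto
qed

lemma interK:
  assumes w: "w \<in> R" and w': "w' \<in> R" and ww: "w \<noteq> w'"
  shows "card (K w \<inter> K w') \<le> 6 + s + card B"
proof -
  define X where "X = (M w \<union> M w') - {w,w'}"
  have wV: "w \<in> V" "w \<noteq> x" "w' \<in> V" "w' \<noteq> x" using w w' R_V by auto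
  have XR: "X \<subseteq> R - {w,w'}" unfolding X_def M_def by auto
  have Mw: "\<alpha> ` M w \<subseteq> \<alpha> ` X \<union> {\<alpha> w, \<alpha> w'}" unfolding X_def M_def by auto
  have Mw': "\<alpha> ` M w' \<subseteq> \<alpha> ` X \<union> {\<alpha> w, \<alpha> w'}" unfolding X_def M_def by auto
  have sub: "CN w \<union> CN w' \<subseteq> (\<alpha> ` X \<union> {\<alpha> w, \<alpha> w'}) \<union> N3s w \<union> N3s w' \<union> CB w \<union> CB w'"
    using cover[OF wV(1,2)] cover[OF wV(3,4)] Mw Mw' by blast
  have fins: "finite (\<alpha> ` X)" "finite (N3s w)" "finite (N3s w')" "finite (CB w)" "finite (CB w')"
    using finR XR finite_subset finB
    by (auto simp: N3s_def CB_def Zw_def intro: finite_subset[OF _ finR])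
  have "card (CN w \<union> CN w') \<le> card ((\<alpha> ` X \<union> {\<alpha> w, \<alpha> w'}) \<union> N3s w \<union> N3s w' \<union> CB w \<union> CB w')"
    using sub fins by (intro card_mono) auto
  also have "\<dots> \<le> card (\<alpha> ` X \<union> {\<alpha> w, \<alpha> w'}) + card (N3s w) + card (N3s w') + card (CB w) + card (CB w')"
    using card_Un_le[of "(\<alpha> ` X \<union> {\<alpha> w, \<alpha> w'}) \<union> N3s w \<union> N3s w' \<union> CB w" "CB w'"]
      card_Un_le[of "(\<alpha> ` X \<union> {\<alpha> w, \<alpha> w'}) \<union> N3s w \<union> N3s w'" "CB w"]
      card_Un_le[of "(\<alpha> ` X \<union> {\<alpha> w, \<alpha> w'}) \<union> N3s w" "N3s w'"]
      card_Un_le[of "(\<alpha> ` X \<union> {\<alpha> w, \<alpha> w'})" "N3s w"] by linarith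
  also have "\<dots> \<le> (card (\<alpha> ` X) + 2) + 3 + 3 + card B + card B"
  proof -
    have "card (\<alpha> ` X \<union> {\<alpha> w, \<alpha> w'}) \<le> card (\<alpha> ` X) + card {\<alpha> w, \<alpha> w'}" by (rule card_Un_le)
    moreover have "card {\<alpha> w, \<alpha> w'} \<le> 2" by (simp add: card_insert_le_m1)
    ultimately show ?thesis using N3s_card[OF wV(1,2)] N3s_card[OF wV(3,4)] CB_card[of w] CB_card[of w'] by linarith
  qed
  finally have c1: "card (CN w \<union> CN w') \<le> card (\<alpha> ` X) + 8 + 2 * card B" by simp
  have cX: "card (\<alpha> ` X) = card X" using Rinj XR by (intro card_image) (auto intro: inj_on_subset)
  have c2: "card V \<le> card (CN w \<union> CN w') + 1 + s" using cond wV ww by auto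
  have "K w \<inter> K w' \<subseteq> (R - {w,w'}) - X" unfolding K_def X_def by auto
  then have "card (K w \<inter> K w') \<le> card ((R - {w,w'}) - X)" using finR by (intro card_mono) auto
  also have "\<dots> = card (R - {w,w'}) - card X" using XR finR by (intro card_Diff_subset) (auto intro: finite_subset)
  finally have c3: "card (K w \<inter> K w') \<le> card (R - {w,w'}) - card X" .
  have "card (R - {w,w'}) = card R - card {w,w'}" using w w' finR by (intro card_Diff_subset) auto
  moreover have "card {w,w'} = 2" using ww by simp
  moreover have "card {w,w'} \<le> card R" using w w' finR by (intro card_mono) auto
  ultimately have c4: "card (R - {w,w'}) + 2 = card R" by linarith
  show ?thesis using c1 c2 c3 c4 cX card_split by linarith
qed


lemma Rpart: assumes bs: "card B \<le> 3*s+10" shows False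
proof -
  define m where "m = card R"
  define L where "L = 6 + s + card B"
  define OD where "OD = {p\<in>R\<times>R. fst p \<noteq> snd p}"
  define k where "k y = card {w\<in>R. y \<in> K w}" for y
  define T where "T = (\<Sum>y\<in>R. k y)"
  have finOD: "finite OD" unfolding OD_def using finR by auto
  have finK: "finite (K w)" for w using K_sub finR finite_subset by blast
  have cOD: "card OD = m*m - m" unfolding OD_def m_def by (rule card_offdiag[OF finR])
  have sumK: "(\<Sum>w\<in>R. card (K w)) = T"
  proof -
    have "(\<Sum>w\<in>R. card (K w)) = (\<Sum>w\<in>R. card {y\<in>R. y \<in> K w})"
      using K_sub by (intro sum.cong) (auto intro!: arg_cong[where f=card])
    also have "\<dots> = (\<Sum>y\<in>R. card {w\<in>R. y \<in> K w})" by (rule double_count[OF finR finR])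
    finally show ?thesis unfolding T_def k_def .
  qed
  have low: "m*m - m \<le> 2*T"
  proof -
    let ?P = "Sigma R K"
    have "OD \<subseteq> ?P \<union> prod.swap ` ?P"
    proof
      fix p assume "p \<in> OD"
      then obtain a b where ab: "p = (a,b)" "a \<in> R" "b \<in> R" "a \<noteq> b" unfolding OD_def by auto
      from pairK[OF ab(2,3,4)] show "p \<in> ?P \<union> prod.swap ` ?P"
      proof
        assume "b \<in> K a" then show ?thesis using ab by auto
      next
        assume "a \<in> K b"
        then have "(b,a) \<in> ?P" using ab by auto
        then have "prod.swap (b,a) \<in> prod.swap ` ?P" by (rule imageI)
        then show ?thesis using ab by simp
      qed
    qed
    then have "card OD \<le> card (?P \<union> prod.swap ` ?P)" using finR finK by (intro card_mono) auto
    also have "\<dots> \<le> card ?P + card (prod.swap ` ?P)" by (rule card_Un_le)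
    also have "\<dots> \<le> card ?P + card ?P" using card_image_le finR finK by (simp add: card_image)
    also have "card ?P = (\<Sum>w\<in>R. card (K w))" using finR finK by simp
    finally show ?thesis using cOD sumK by simp
  qed
  have kk: "k y * k y - k y = card {p\<in>OD. y \<in> K (fst p) \<and> y \<in> K (snd p)}" if "y \<in> R" for y
  proof -
    let ?Ky = "{w\<in>R. y \<in> K w}"
    have "{p\<in>OD. y \<in> K (fst p) \<and> y \<in> K (snd p)} = {p\<in>?Ky\<times>?Ky. fst p \<noteq> snd p}"
      unfolding OD_def by auto
    then show ?thesis unfolding k_def using card_offdiag[of ?Ky] finR by simp
  qed
  have up: "(\<Sum>y\<in>R. k y * k y - k y) \<le> (m*m - m) * L"
  proof -
    have "(\<Sum>y\<in>R. k y * k y - k y) = (\<Sum>y\<in>R. card {p\<in>OD. y \<in> K (fst p) \<and> y \<in> K (snd p)})"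
      using kk by (rule sum.cong[OF refl])
    also have "\<dots> = (\<Sum>p\<in>OD. card {y\<in>R. y \<in> K (fst p) \<and> y \<in> K (snd p)})"
      by (rule double_count[OF finR finOD])
    also have "\<dots> \<le> (\<Sum>p\<in>OD. L)"
    proof (rule sum_mono)
      fix p assume p: "p \<in> OD"
      obtain a b where ab: "p = (a,b)" "a \<in> R" "b \<in> R" "a \<noteq> b" using p unfolding OD_def by auto
      have "{y\<in>R. y \<in> K (fst p) \<and> y \<in> K (snd p)} = K a \<inter> K b" using K_sub ab by auto
      moreover have "card (K a \<inter> K b) \<le> L" unfolding L_def by (rule interK[OF ab(2,3,4)])
      ultimately show "card {y\<in>R. y \<in> K (fst p) \<and> y \<in> K (snd p)} \<le> L" by simp
    qed
    also have "\<dots> = (m*m-m)*L" by (simp add: cOD)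
    finally show ?thesis .
  qed
  have sq: "(\<Sum>y\<in>R. k y ^ 2) = (\<Sum>y\<in>R. k y * k y - k y) + T"
  proof -
    have e1: "(\<Sum>y\<in>R. (k y * k y - k y) + k y) = (\<Sum>y\<in>R. k y ^ 2)"
      by (rule sum.cong) (auto simp: power2_eq_square le_square)
    have e2: "(\<Sum>y\<in>R. (k y * k y - k y) + k y) = (\<Sum>y\<in>R. k y * k y - k y) + T"
      unfolding T_def by (rule sum.distrib)
    show ?thesis using e1 e2 by simp
  qed
  have cs: "T^2 \<le> m * (\<Sum>y\<in>R. k y ^ 2)" unfolding T_def m_def by (rule cs_nat[OF finR])
  have cs2: "T^2 \<le> m * ((m*m-m)*L + T)"
  proof -
    have "m * (\<Sum>y\<in>R. k y ^ 2) \<le> m * ((m*m-m)*L + T)" using sq up by simp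
    then show ?thesis using cs by linarith
  qed
  have split: "card B + m + 1 = card V" using card_split m_def by simp
  show False
  proof (cases "m \<ge> 2")
    case True
    have mm: "m \<le> m*m" by (simp add: le_square)
    have i1: "int m * int m - int m \<le> 2 * int T"
    proof -
      have eq: "int (m*m - m) = int m * int m - int m" using mm by (simp add: of_nat_diff)
      have "int (m*m - m) \<le> int (2*T)" using low by (simp only: of_nat_le_iff)
      then show ?thesis using eq by simp
    qed
    have i2: "(int T)^2 \<le> int m * ((int m * int m - int m) * int L + int T)"
    proof -
      have eq: "int (m*m - m) = int m * int m - int m" using mm by (simp add: of_nat_diff)
      have "int (T^2) \<le> int (m * ((m*m-m)*L + T))" using cs2 by (simp only: of_nat_le_iff)
      then have "int T ^ 2 \<le> int m * (int (m*m-m) * int L + int T)" by (simp only: of_nat_mult of_nat_add of_nat_power)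
      then show ?thesis using eq by simp
    qed
    have "int m \<le> 4 * int L + 3" by (rule arith1[OF _ i1 i2]) (use True in simp)
    then have "m \<le> 4*(6+s+card B)+3" unfolding L_def by linarith
    then show False using split bs big by presburger
  next
    case False
    then show False using split bs big by presburger
  qed
qed

end



context cgx begin

definition AN where "AN w = {z\<in>B. {w,z} \<in> E \<and> C {w,z} \<notin> CN x}"
definition NB where "NB w = (\<lambda>z. C {w,z}) ` AN w"
definition pick2 where "pick2 w \<gamma> = (SOME z. z \<in> AN w \<and> C {w,z} = \<gamma>)"
definition S where "S w = pick2 w ` NB w"
definition mono where "mono a c = {y\<in>(S a \<inter> S c) - {a,c}. C {a,y} = C {c,y}}"

lemma B_V: "B \<subseteq> V" unfolding B_def by auto

lemma AN_sub: "AN w \<subseteq> B - {w}"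
proof
  fix z assume "z \<in> AN w"
  then have "z \<in> B" "{w,z} \<in> E" unfolding AN_def by auto
  then show "z \<in> B - {w}" using edge_facts(3)[of w z] by auto
qed

lemma finAN: "finite (AN w)" using AN_sub finB finite_subset by blast

lemma pick2_spec: assumes "\<gamma> \<in> NB w" shows "pick2 w \<gamma> \<in> AN w" "C {w, pick2 w \<gamma>} = \<gamma>"
proof -
  have "\<exists>z. z \<in> AN w \<and> C {w,z} = \<gamma>" using assms unfolding NB_def by auto
  then have "pick2 w \<gamma> \<in> AN w \<and> C {w, pick2 w \<gamma>} = \<gamma>" unfolding pick2_def by (rule someI_ex)
  then show "pick2 w \<gamma> \<in> AN w" "C {w, pick2 w \<gamma>} = \<gamma>" by auto
qed

lemma S_sub: "S w \<subseteq> AN w" unfolding S_def using pick2_spec by auto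

lemma S_inj: "inj_on (\<lambda>z. C {w,z}) (S w)"
proof (rule inj_onI)
  fix a b assume "a \<in> S w" "b \<in> S w" "C {w,a} = C {w,b}"
  then obtain g h where "g \<in> NB w" "h \<in> NB w" "a = pick2 w g" "b = pick2 w h" unfolding S_def by auto
  then show "a = b" using pick2_spec(2)[of g w] pick2_spec(2)[of h w] \<open>C {w,a} = C {w,b}\<close> by simp
qed

lemma S_card: "card (S w) = card (NB w)"
  unfolding S_def
proof (rule card_image)
  show "inj_on (pick2 w) (NB w)"
  proof (rule inj_onI)
    fix a b assume ab: "a \<in> NB w" "b \<in> NB w" "pick2 w a = pick2 w b"
    have "a = C {w, pick2 w a}" using pick2_spec(2)[OF ab(1)] by simp
    also have "\<dots> = C {w, pick2 w b}" using ab(3) by (rule arg_cong)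
    also have "\<dots> = b" using pick2_spec(2)[OF ab(2)] .
    finally show "a = b" .
  qed
qed

lemma AN_card: "w \<in> B \<Longrightarrow> card (AN w) + 1 \<le> card B"
proof -
  assume w: "w \<in> B"
  have "card (AN w) \<le> card (B - {w})" using AN_sub finB by (intro card_mono) auto
  moreover have "card B > 0" using w finB card_gt_0_iff by blast
  moreover have "card (B - {w}) = card B - 1" using w finB by (simp add: card_Diff_singleton)
  ultimately show ?thesis by linarith
qed

lemma NB_card: assumes w: "w \<in> B" shows "card B \<le> card (NB w) + s + 3"
proof -
  have wV: "w \<in> V" "w \<noteq> x" using w unfolding B_def by auto
  have sub: "CN w - CN x \<subseteq> NB w \<union> N3s w"
  proof
    fix \<gamma> assume g: "\<gamma> \<in> CN w - CN x"
    then have "\<gamma> \<in> CN w" by simp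
    then obtain z where z: "{w,z} \<in> E" "C {w,z} = \<gamma>" "z \<noteq> w" "z \<in> V" by (rule CN_mem)
    show "\<gamma> \<in> NB w \<union> N3s w"
    proof (cases "z = x")
      case True
      then have "{x,w} \<in> E" using z by (simp add: insert_commute)
      then have "C {x,w} \<in> CN x" by (rule CN_edge)
      then show ?thesis using g z True by (simp add: insert_commute)
    next
      case False
      show ?thesis
      proof (cases "z \<in> R")
        case True
        show ?thesis
        proof (cases "C {w,z} = \<alpha> z")
          case True
          then show ?thesis using g z alpha_CN[OF \<open>z\<in>R\<close>] by auto
        next
          case False
          then have "z \<in> Zw w" unfolding Zw_def using \<open>z\<in>R\<close> z by auto
          then show ?thesis using z unfolding N3s_def by auto
        qed
      next
        case False
        have "z \<in> B" unfolding B_def using z \<open>z \<noteq> x\<close> False by simp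
        moreover have "C {w,z} \<notin> CN x" using z g by simp
        ultimately have "z \<in> AN w" unfolding AN_def using z by simp
        then show ?thesis using z unfolding NB_def by auto
      qed
    qed
  qed
  have finNB: "finite (NB w)" unfolding NB_def using finAN by auto
  have "finite (Zw w)" unfolding Zw_def using finR by (rule rev_finite_subset) auto
  then have finN3: "finite (N3s w)" unfolding N3s_def by simp
  have "card (CN w - CN x) \<le> card (NB w \<union> N3s w)" using sub finNB finN3 by (intro card_mono) auto
  also have "\<dots> \<le> card (NB w) + card (N3s w)" by (rule card_Un_le)
  finally have c1: "card (CN w - CN x) \<le> card (NB w) + 3" using N3s_card[OF wV] by linarith
  have eq: "CN x \<union> CN w = CN x \<union> (CN w - CN x)" by auto
  have c2: "card (CN x \<union> CN w) = card (CN x) + card (CN w - CN x)"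
    unfolding eq by (rule card_Un_disjoint) (auto simp: finCN)
  have c3: "card V \<le> card (CN x \<union> CN w) + 1 + s" by (rule cond[rule_format, OF x wV(1) wV(2)[symmetric]])
  show ?thesis using c1 c2 c3 card_split cardR by linarith
qed

end



context cgx begin

lemma S_sub_B: "S w \<subseteq> B - {w}" using S_sub AN_sub by blast

lemma finS: "finite (S w)" using S_sub finAN finite_subset by blast

lemma mono_sub: "mono a c \<subseteq> B" unfolding mono_def using S_sub_B by blast

lemma good_pair: assumes bb: "3*s+11 \<le> card B"
  shows "\<exists>a\<in>B. \<exists>c\<in>B. a \<noteq> c \<and> card (mono a c) \<le> s"
proof (rule ccontr)
  assume "\<not> ?thesis"
  then have allbig: "\<And>a c. a \<in> B \<Longrightarrow> c \<in> B \<Longrightarrow> a \<noteq> c \<Longrightarrow> s + 1 \<le> card (mono a c)" by force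
  define b where "b = card B"
  define OD where "OD = {p\<in>B\<times>B. fst p \<noteq> snd p}"
  have finOD: "finite OD" unfolding OD_def using finB by simp
  have cOD: "card OD = b*b - b" unfolding OD_def b_def by (rule card_offdiag[OF finB])
  have lowsum: "(b*b - b) * (s+1) \<le> (\<Sum>p\<in>OD. card (mono (fst p) (snd p)))"
  proof -
    have "(\<Sum>p\<in>OD. s+1) \<le> (\<Sum>p\<in>OD. card (mono (fst p) (snd p)))"
      by (rule sum_mono) (use allbig in \<open>auto simp: OD_def\<close>)
    then show ?thesis using cOD by simp
  qed
  have fibb: "card {p\<in>OD. y \<in> mono (fst p) (snd p)} \<le> 2*(s+2)^2" if y: "y \<in> B" for y
  proof -
    define g where "g a = C {y,a}" for a
    have sub: "{p\<in>OD. y \<in> mono (fst p) (snd p)} \<subseteq> {(a,c). a\<in>AN y \<and> c\<in>AN y \<and> a\<noteq>c \<and> g a = g c}"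
    proof
      fix p assume p: "p \<in> {p\<in>OD. y \<in> mono (fst p) (snd p)}"
      obtain a c where ac: "p = (a,c)" "a \<in> B" "c \<in> B" "a \<noteq> c" "y \<in> mono a c" using p unfolding OD_def by auto
      then have yac: "y \<in> S a" "y \<in> S c" "C {a,y} = C {c,y}" unfolding mono_def by auto
      have "y \<in> AN a" "y \<in> AN c" using yac S_sub by auto
      then have "{a,y} \<in> E" "C {a,y} \<notin> CN x" "{c,y} \<in> E" "C {c,y} \<notin> CN x" unfolding AN_def by auto
      then have "a \<in> AN y" "c \<in> AN y" using ac unfolding AN_def by (auto simp: insert_commute)
      moreover have "g a = g c" unfolding g_def using yac(3) by (simp add: insert_commute)
      ultimately show "p \<in> {(a,c). a\<in>AN y \<and> c\<in>AN y \<and> a\<noteq>c \<and> g a = g c}" using ac by simp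
    qed
    have fin2: "finite {(a,c). a\<in>AN y \<and> c\<in>AN y \<and> a\<noteq>c \<and> g a = g c}"
      by (rule finite_subset[of _ "AN y \<times> AN y"]) (auto simp: finAN)
    have "card {p\<in>OD. y \<in> mono (fst p) (snd p)} \<le> card {(a,c). a\<in>AN y \<and> c\<in>AN y \<and> a\<noteq>c \<and> g a = g c}"
      by (rule card_mono[OF fin2 sub])
    also have "\<dots> \<le> 2*(card (AN y) - card (g ` AN y))^2" by (rule fiber_pairs[OF finAN])
    also have "\<dots> \<le> 2*(s+2)^2"
    proof -
      have eqg: "g ` AN y = NB y" unfolding NB_def g_def by simp
      have "card (AN y) - card (NB y) \<le> s+2" using AN_card[OF y] NB_card[OF y] by linarith
      then have "card (AN y) - card (g ` AN y) \<le> s+2" unfolding eqg .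
      then show ?thesis by (simp add: power_mono)
    qed
    finally show ?thesis .
  qed
  have "(\<Sum>p\<in>OD. card (mono (fst p) (snd p))) = (\<Sum>p\<in>OD. card {y\<in>B. y \<in> mono (fst p) (snd p)})"
  proof (rule sum.cong[OF refl])
    fix p show "card (mono (fst p) (snd p)) = card {y\<in>B. y \<in> mono (fst p) (snd p)}"
      using mono_sub[of "fst p" "snd p"] by (intro arg_cong[where f=card]) blast
  qed
  also have "\<dots> = (\<Sum>y\<in>B. card {p\<in>OD. y \<in> mono (fst p) (snd p)})"
    by (rule double_count[OF finOD finB])
  also have "\<dots> \<le> (\<Sum>y\<in>B. 2*(s+2)^2)" by (rule sum_mono) (rule fibb)
  also have "\<dots> = b * (2*(s+2)^2)" unfolding b_def by simp
  finally have upsum: "(\<Sum>p\<in>OD. card (mono (fst p) (snd p))) \<le> b * (2*(s+2)^2)" .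
  have bpos: "b > 0" using bb b_def by simp
  have "b * ((b - 1) * (s+1)) \<le> b * (2*(s+2)^2)"
  proof -
    have "b*b - b = b * (b-1)" by (simp add: right_diff_distrib')
    then have e: "(b*b - b)*(s+1) = b*((b-1)*(s+1))" by (simp only: mult.assoc)
    show ?thesis using lowsum upsum unfolding e by (rule order.trans)
  qed
  then have h: "(b-1)*(s+1) \<le> 2*(s+2)^2" using bpos by simp
  have "(3*s+10)*(s+1) \<le> (b-1)*(s+1)" using bb b_def by (intro mult_right_mono) auto
  then have "(3*s+10)*(s+1) \<le> 2*(s+2)^2" using h by linarith
  then show False by (simp add: power2_eq_square algebra_simps)
qed


lemma card_minus1: "finite A \<Longrightarrow> card A \<le> card (A - {z}) + 1"
  by (cases "z \<in> A") (auto simp: card_Diff_singleton card_gt_0_iff)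

lemma Bpart: assumes bb: "3*s+11 \<le> card B" shows False
proof -
  obtain a c where ac: "a \<in> B" "c \<in> B" "a \<noteq> c" "card (mono a c) \<le> s"
    using good_pair[OF bb] by blast
  define A0 where "A0 = (S a \<inter> S c) - {a,c}"
  define Y where "Y = A0 - mono a c"
  define X1 where "X1 = S a - {c}"
  define X2 where "X2 = S c - {a}"
  have aS: "a \<notin> S a" "c \<notin> S c" using S_sub_B by auto
  have A0eq: "A0 = X1 \<inter> X2" unfolding A0_def X1_def X2_def using aS by auto
  have finX: "finite X1" "finite X2" unfolding X1_def X2_def using finS by auto
  have "card (S a) \<le> card X1 + 1" unfolding X1_def by (rule card_minus1[OF finS])
  moreover have "card (S c) \<le> card X2 + 1" unfolding X2_def by (rule card_minus1[OF finS])
  moreover have "card B \<le> card (S a) + s + 3" using NB_card[OF ac(1)] S_card by simp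
  moreover have "card B \<le> card (S c) + s + 3" using NB_card[OF ac(2)] S_card by simp
  moreover have "card (X1 \<union> X2) \<le> card (B - {a,c})"
    using S_sub_B finB unfolding X1_def X2_def by (intro card_mono) auto
  moreover have "card (B - {a,c}) = card B - 2"
  proof -
    have "card (B - {a,c}) = card B - card {a,c}" using ac finB by (intro card_Diff_subset) auto
    then show ?thesis using ac(3) by simp
  qed
  moreover have "card X1 + card X2 = card (X1 \<union> X2) + card (X1 \<inter> X2)" by (rule card_Un_Int[OF finX])
  ultimately have cA0: "card B \<le> card A0 + 2*s + 6" unfolding A0eq by linarith
  have monoA0: "mono a c \<subseteq> A0" unfolding mono_def A0_def by auto
  have finA0: "finite A0" unfolding A0_def using finS by auto
  have "card Y = card A0 - card (mono a c)" unfolding Y_def by (rule card_Diff_subset[OF finite_subset[OF monoA0 finA0] monoA0])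
  then have cY: "5 \<le> card Y" using cA0 ac(4) bb card_mono[OF finA0 monoA0] by linarith
  have YS: "Y \<subseteq> S a" "Y \<subseteq> S c" unfolding Y_def A0_def by auto
  have aV: "a \<in> V" "c \<in> V" using ac B_V by auto
  have "card ((\<lambda>y. C {c,y}) ` Y) \<le> 3"
  proof (rule N3[OF aV ac(3)])
    show "Y \<subseteq> V - {a,c}"
    proof -
      have "Y \<subseteq> B" using YS(1) S_sub_B[of a] by blast
      moreover have "a \<notin> Y" "c \<notin> Y" unfolding Y_def A0_def by auto
      ultimately show ?thesis using B_V by blast
    qed
    show "\<forall>y\<in>Y. {a,y} \<in> E \<and> {c,y} \<in> E \<and> C {a,y} \<noteq> C {c,y}"
    proof
      fix y assume y: "y \<in> Y"
      then have "y \<in> AN a" "y \<in> AN c" using YS S_sub by auto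
      then have "{a,y} \<in> E" "{c,y} \<in> E" unfolding AN_def by auto
      moreover have "C {a,y} \<noteq> C {c,y}" using y unfolding Y_def A0_def mono_def by auto
      ultimately show "{a,y} \<in> E \<and> {c,y} \<in> E \<and> C {a,y} \<noteq> C {c,y}" by simp
    qed
    show "inj_on (\<lambda>y. C {a,y}) Y" using S_inj YS(1) by (rule inj_on_subset)
  qed
  moreover have "card ((\<lambda>y. C {c,y}) ` Y) = card Y" using S_inj YS(2) by (intro card_image) (rule inj_on_subset)
  ultimately show False using cY by linarith
qed

end

lemma core:
  fixes V :: "'a set" and E :: "'a set set" and C :: "'a set \<Rightarrow> nat" and s :: nat
  assumes sg: "simple_graph V E"
    and cond: "\<forall>u\<in>V. \<forall>v\<in>V. u \<noteq> v \<longrightarrow> card V \<le> card (color_nbhd E C u \<union> color_nbhd E C v) + 1 + s"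
    and big: "79 + 19*s \<le> card V"
  shows "\<exists>F. is_C4 V E F \<and> rainbow C F"
proof (rule ccontr)
  assume nr: "\<not> ?thesis"
  interpret cg V E C using sg nr by unfold_locales
  have "V \<noteq> {}" using big by auto
  then obtain x where x: "x \<in> V" by auto
  define pick where "pick \<gamma> = (SOME y. {x,y} \<in> E \<and> C {x,y} = \<gamma>)" for \<gamma>
  have pick: "{x, pick \<gamma>} \<in> E \<and> C {x, pick \<gamma>} = \<gamma>" if g0: "\<gamma> \<in> CN x" for \<gamma>
  proof -
    obtain z where "{x,z} \<in> E" "C {x,z} = \<gamma>" "z \<noteq> x" "z \<in> V" by (rule CN_mem[OF g0])
    then have "\<exists>y. {x,y} \<in> E \<and> C {x,y} = \<gamma>" by blast
    then show ?thesis unfolding pick_def by (rule someI_ex)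
  qed
  define R where "R = pick ` CN x"
  have Rsub: "\<forall>y\<in>R. {x,y} \<in> E" unfolding R_def using pick by auto
  have Rinj: "inj_on (\<lambda>y. C {x,y}) R"
  proof (rule inj_onI)
    fix a b assume "a \<in> R" "b \<in> R" "C {x,a} = C {x,b}"
    then obtain g h where gh: "g \<in> CN x" "h \<in> CN x" "a = pick g" "b = pick h" unfolding R_def by auto
    then have "g = h" using pick[OF gh(1)] pick[OF gh(2)] \<open>C {x,a} = C {x,b}\<close> by simp
    then show "a = b" using gh by simp
  qed
  have Rim: "(\<lambda>y. C {x,y}) ` R = CN x"
  proof
    show "(\<lambda>y. C {x,y}) ` R \<subseteq> CN x" using Rsub CN_edge by auto
    show "CN x \<subseteq> (\<lambda>y. C {x,y}) ` R"
    proof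
      fix g assume g: "g \<in> CN x"
      then have "C {x, pick g} = g" using pick by blast
      then show "g \<in> (\<lambda>y. C {x,y}) ` R" unfolding R_def using g by (metis imageI)
    qed
  qed
  interpret cgx V E C x R s using x Rsub Rinj Rim cond big by unfold_locales auto
  show False
  proof (cases "3*s+11 \<le> card B")
    case True then show False by (rule Bpart)
  next
    case False then show False using Rpart by simp
  qed
qed




lemma C4_card: assumes "is_C4 V E F" shows "card F \<le> 4 \<and> F \<noteq> {} \<and> F \<subseteq> E"
proof -
  from assms obtain a b c d where "a \<in> V \<and> b \<in> V \<and> c \<in> V \<and> d \<in> V \<and>
      distinct [a, b, c, d] \<and> F = {{a,b},{b,c},{c,d},{d,a}} \<and> F \<subseteq> E"
    unfolding is_C4_def by (elim exE)
  then have F: "F = set [{a,b},{b,c},{c,d},{d,a}]" "F \<subseteq> E" by auto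
  have "card (set [{a,b},{b,c},{c,d},{d,a}]) \<le> length [{a,b},{b,c},{c,d},{d,a}]" by (rule card_length)
  then have "card F \<le> 4" unfolding F(1) by simp
  then show ?thesis using F by auto
qed

lemma C4_mono: assumes "is_C4 V E' F" "E' \<subseteq> E" shows "is_C4 V E F"
proof -
  obtain a b c d where H: "a \<in> V \<and> b \<in> V \<and> c \<in> V \<and> d \<in> V \<and>
      distinct [a, b, c, d] \<and> F = {{a,b},{b,c},{c,d},{d,a}} \<and> F \<subseteq> E'"
    using assms(1) unfolding is_C4_def by (elim exE)
  have "F \<subseteq> E" using H assms(2) by (meson subset_trans)
  then have "a \<in> V \<and> b \<in> V \<and> c \<in> V \<and> d \<in> V \<and>
      distinct [a, b, c, d] \<and> F = {{a,b},{b,c},{c,d},{d,a}} \<and> F \<subseteq> E" using H by simp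
  then show ?thesis unfolding is_C4_def by (intro exI)
qed

lemma many:
  fixes V :: "'a set" and E :: "'a set set" and C :: "'a set \<Rightarrow> nat" and k :: nat
  assumes sg: "simple_graph V E"
    and k1: "k \<ge> 1"
    and nk: "int (card V) \<ge> 105 * int k - 24"
    and cond: "\<forall>u\<in>V. \<forall>v\<in>V. u \<noteq> v \<longrightarrow>
           card (color_nbhd E C u \<union> color_nbhd E C v) + 1 \<ge> card V"
  shows "t \<le> k \<Longrightarrow> \<exists>S. finite S \<and> card S = t \<and> (\<forall>F\<in>S. is_C4 V E F \<and> rainbow C F)"
proof (induction t)
  case 0 then show ?case by (intro exI[of _ "{}"]) simp
next
  case (Suc t)
  then obtain S where S: "finite S" "card S = t" "\<forall>F\<in>S. is_C4 V E F \<and> rainbow C F" by auto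
  define D where "D = \<Union>S"
  define E' where "E' = E - D"
  have finV: "finite V" using sg unfolding simple_graph_def by auto
  have finE: "finite E"
  proof -
    have "E \<subseteq> Pow V" using sg unfolding simple_graph_def by auto
    then show ?thesis using finV finite_subset by blast
  qed
  have sg': "simple_graph V E'" using sg unfolding simple_graph_def E'_def by auto
  have cD: "card D \<le> 4*t"
  proof -
    have "card D \<le> (\<Sum>F\<in>S. card F)" unfolding D_def by (rule card_Union_le_sum_card)
    also have "\<dots> \<le> (\<Sum>F\<in>S. 4)"
    proof (rule sum_mono)
      fix F assume "F \<in> S"
      then have "is_C4 V E F" using S(3) by simp
      then show "card F \<le> 4" using C4_card by blast
    qed
    finally show ?thesis using S(2) by simp
  qed
  have DE: "D \<subseteq> E"
  proof
    fix e assume "e \<in> D"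
    then obtain F where "F \<in> S" "e \<in> F" unfolding D_def by auto
    then have "is_C4 V E F" using S(3) by simp
    then have "F \<subseteq> E" using C4_card by blast
    then show "e \<in> E" using \<open>e \<in> F\<close> by auto
  qed
  have finD: "finite D" using DE finE finite_subset by auto
  have cCD: "card (C ` D) \<le> 4*t" using cD card_image_le[OF finD, of C] by linarith
  have cond': "\<forall>u\<in>V. \<forall>v\<in>V. u \<noteq> v \<longrightarrow>
      card V \<le> card (color_nbhd E' C u \<union> color_nbhd E' C v) + 1 + 4*t"
  proof (intro ballI impI)
    fix u v assume uv: "u \<in> V" "v \<in> V" "u \<noteq> v"
    let ?A = "color_nbhd E C u \<union> color_nbhd E C v"
    let ?A' = "color_nbhd E' C u \<union> color_nbhd E' C v"
    have sub: "?A - C ` D \<subseteq> ?A'" unfolding color_nbhd_def E'_def by auto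
    have finA': "finite ?A'" unfolding color_nbhd_def E'_def using finE by auto
    have finA: "finite ?A" unfolding color_nbhd_def using finE by auto
    have "card ?A \<le> card (?A - C ` D) + card (C ` D)"
    proof -
      have "?A \<subseteq> (?A - C ` D) \<union> C ` D" by auto
      then have "card ?A \<le> card ((?A - C ` D) \<union> C ` D)" using finA finD by (intro card_mono) auto
      also have "\<dots> \<le> card (?A - C ` D) + card (C ` D)" by (rule card_Un_le)
      finally show ?thesis .
    qed
    moreover have "card (?A - C ` D) \<le> card ?A'" by (rule card_mono[OF finA' sub])
    moreover have "card V \<le> card ?A + 1" using cond[rule_format, OF uv] .
    ultimately show "card V \<le> card ?A' + 1 + 4*t" using cCD by linarith
  qed
  have big: "79 + 19*(4*t) \<le> card V" using Suc.prems nk k1 by linarith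
  obtain F where F: "is_C4 V E' F" "rainbow C F" using core[OF sg' cond' big] by blast
  have FE: "F \<subseteq> E'" "F \<noteq> {}" using C4_card[OF F(1)] by auto
  have "is_C4 V E F" using C4_mono[OF F(1)] unfolding E'_def by blast
  moreover have "F \<notin> S"
  proof
    assume "F \<in> S"
    then have "F \<subseteq> D" unfolding D_def by auto
    then show False using FE unfolding E'_def by blast
  qed
  then have "finite (insert F S) \<and> card (insert F S) = Suc t \<and> (\<forall>F'\<in>insert F S. is_C4 V E F' \<and> rainbow C F')"
    using S F \<open>is_C4 V E F\<close> by simp
  then show ?case by (rule exI)
qed

theorem theorem6:
  fixes V :: "'a set" and E :: "'a set set" and C :: "'a set \<Rightarrow> nat" and k :: nat
  assumes "simple_graph V E"
    and "k \<ge> 1"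
    and "int (card V) \<ge> 105 * int k - 24"
    and "\<forall>u\<in>V. \<forall>v\<in>V. u \<noteq> v \<longrightarrow>
           card (color_nbhd E C u \<union> color_nbhd E C v) + 1 \<ge> card V"
  shows "\<exists>S. card S = k \<and> (\<forall>F\<in>S. is_C4 V E F \<and> rainbow C F)"
  using many[OF assms, of k] by blast


end
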